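(* For all $d,k,N\in\mathbb{N}$, all $\mathbf{x}\in\mathcal{G}_{d,k}$ and all $u\in\mathbb{N}^N$ with $u_1+\dots+u_N\in N\mathbb{Z}$, $$\mathsf{bary}(\mathbf{x}^{u_1},\dots,\mathbf{x}^{u_N})=\mathbf{x}^{(u_1+\dots+u_N)/N}.$$
   Context: $T_{d,k}=\bigoplus_{\ell=0}^k(\mathbb{R}^d)^{\otimes\ell}$ is the truncated tensor algebra with product the bilinear extension of the tensor product of levels, set to $0$ when the total level exceeds $k$. $\mathfrak{g}_{d,k}$ is the smallest Lie subalgebra (commutator bracket) of $T_{d,k}$ containing $e_1,\dots,e_d\in\mathbb{R}^d$; $\exp(\mathbf{z})=\sum_{\ell=0}^k\mathbf{z}^{\otimes\ell}/\ell!$; $\mathcal{G}_{d,k}=\exp(\mathfrak{g}_{d,k})$, a group under the product of $T_{d,k}$ (powers $\mathbf{x}^n$ are group powers), with $\log=\exp^{-1}$, $\log(\mathbf{s})=\sum_{\ell\ge1}\frac{(-1)^{\ell+1}}{\ell}(\mathbf{s}-1)^{\otimes\ell}$. For $\mathbf{x}\in\mathcal{G}_{d,k}^N$, $\mathsf{bary}(\mathbf{x})$ is the unique $\mathbf{m}\in\mathcal{G}_{d,k}$ with $\sum_{i=1}^N\log(\mathbf{m}^{-1}\mathbf{x}_i)=0$. *)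

theory Defs
  imports Complex_Main
begin

text \<open>Truncated tensor algebra T_{d,k}: an element is a real-valued coefficient
function on words (lists of letters i < d) of length at most k; the word
w = [i1,...,il] stands for the basis tensor e_i1 (x) ... (x) e_il of level l.\<close>

type_synonym tensor = "nat list \<Rightarrow> real"

definition in_T :: "nat \<Rightarrow> nat \<Rightarrow> tensor \<Rightarrow> bool" where
  "in_T d k a \<longleftrightarrow> (\<forall>w. a w \<noteq> 0 \<longrightarrow> length w \<le> k \<and> set w \<subseteq> {..<d})"

definition tone :: tensor where
  "tone w = (if w = [] then 1 else 0)"

definition tletter :: "nat \<Rightarrow> nat \<Rightarrow> tensor" where
  "tletter k i w = (if w = [i] \<and> 1 \<le> k then 1 else 0)"

definition tmul :: "nat \<Rightarrow> tensor \<Rightarrow> tensor \<Rightarrow> tensor" where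
  "tmul k a b w = (if length w \<le> k
      then (\<Sum>i\<le>length w. a (take i w) * b (drop i w)) else 0)"

definition tbracket :: "nat \<Rightarrow> tensor \<Rightarrow> tensor \<Rightarrow> tensor" where
  "tbracket k a b = (\<lambda>w. tmul k a b w - tmul k b a w)"

definition tpow :: "nat \<Rightarrow> tensor \<Rightarrow> nat \<Rightarrow> tensor" where
  "tpow k a n = ((tmul k a) ^^ n) tone"

definition texp :: "nat \<Rightarrow> tensor \<Rightarrow> tensor" where
  "texp k z = (\<lambda>w. \<Sum>l\<le>k. (1 / fact l) * tpow k z l w)"

definition tlog :: "nat \<Rightarrow> tensor \<Rightarrow> tensor" where
  "tlog k s = (\<lambda>w. \<Sum>l\<in>{1..k}. ((-1) ^ (l + 1) / real l) * tpow k (\<lambda>v. s v - tone v) l w)"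

text \<open>The free step-k nilpotent Lie algebra g_{d,k}: the smallest Lie subalgebra
(subspace closed under commutator bracket) of T_{d,k} containing e_1..e_d.\<close>
inductive_set lie_alg :: "nat \<Rightarrow> nat \<Rightarrow> tensor set" for d k where
  gen: "i < d \<Longrightarrow> tletter k i \<in> lie_alg d k"
| zero: "(\<lambda>w. 0) \<in> lie_alg d k"
| add: "a \<in> lie_alg d k \<Longrightarrow> b \<in> lie_alg d k \<Longrightarrow> (\<lambda>w. a w + b w) \<in> lie_alg d k"
| smult: "a \<in> lie_alg d k \<Longrightarrow> (\<lambda>w. c * a w) \<in> lie_alg d k"
| bracket: "a \<in> lie_alg d k \<Longrightarrow> b \<in> lie_alg d k \<Longrightarrow> tbracket k a b \<in> lie_alg d k"

definition lie_group :: "nat \<Rightarrow> nat \<Rightarrow> tensor set" where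
  "lie_group d k = texp k ` lie_alg d k"

definition ginv :: "nat \<Rightarrow> nat \<Rightarrow> tensor \<Rightarrow> tensor" where
  "ginv d k x = (THE y. y \<in> lie_group d k \<and> tmul k x y = tone)"

definition bary :: "nat \<Rightarrow> nat \<Rightarrow> nat \<Rightarrow> (nat \<Rightarrow> tensor) \<Rightarrow> tensor" where
  "bary d k N x = (THE m. m \<in> lie_group d k \<and>
      (\<forall>w. (\<Sum>i<N. tlog k (tmul k (ginv d k m) (x i)) w) = 0))"

end

theory Submission
  imports Defs "HOL-Computational_Algebra.Formal_Power_Series"
begin


definition vk :: "nat \<Rightarrow> tensor \<Rightarrow> bool" where
  "vk k a \<longleftrightarrow> (\<forall>w. k < length w \<longrightarrow> a w = 0)"

definition eqlt :: "nat \<Rightarrow> tensor \<Rightarrow> tensor \<Rightarrow> bool" where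
  "eqlt n a b \<longleftrightarrow> (\<forall>v. length v < n \<longrightarrow> a v = b v)"

lemma tmul_Nil[simp]: "tmul k a b [] = a [] * b []"
  by (simp add: tmul_def)

lemma tmul_long: "k < length w \<Longrightarrow> tmul k a b w = 0"
  by (simp add: tmul_def)

lemma vk_tmul[simp]: "vk k (tmul k a b)"
  by (simp add: vk_def tmul_long)

lemma tpow_0[simp]: "tpow k a 0 = tone"
  by (simp add: tpow_def)

lemma tpow_Suc: "tpow k a (Suc n) = tmul k a (tpow k a n)"
  by (simp add: tpow_def)

lemma vk_tone[simp]: "vk k tone"
  by (simp add: vk_def tone_def)

lemma vk_tpow[simp]: "vk k (tpow k a n)"
  by (cases n) (simp_all add: tpow_Suc)

lemma tmul_split:
  assumes "1 \<le> length w" "length w \<le> k"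
  shows "tmul k a b w = a [] * b w + a w * b [] + (\<Sum>i\<in>{1..<length w}. a (take i w) * b (drop i w))"
proof -
  let ?n = "length w"
  have e: "{..?n} = insert 0 (insert ?n {1..<?n})" using assms by auto
  have "tmul k a b w = (\<Sum>i\<in>insert 0 (insert ?n {1..<?n}). a (take i w) * b (drop i w))"
    using assms by (simp add: tmul_def e)
  also have "\<dots> = a [] * b w + a w * b [] + (\<Sum>i\<in>{1..<length w}. a (take i w) * b (drop i w))"
  proof -
    have f: "finite (insert ?n {1..<?n})" "0 \<notin> insert ?n {1..<?n}" "?n \<notin> {1..<?n}"
      using assms by auto
    show ?thesis
      by (simp only: sum.insert[OF f(1) f(2)] sum.insert[OF _ f(3)] finite_atLeastLessThan) (simp add: algebra_simps)
  qed
  finally show ?thesis .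
qed

lemma eqlt_mono: "eqlt n a b \<Longrightarrow> j \<le> n \<Longrightarrow> eqlt j a b"
  by (simp add: eqlt_def)

lemma ML1: "eqlt n a a' \<Longrightarrow> eqlt n b b' \<Longrightarrow> eqlt n (tmul k a b) (tmul k a' b')"
  unfolding eqlt_def tmul_def
  by (auto intro!: sum.cong)

lemma ML2:
  assumes "1 \<le> n" "n \<le> k" "eqlt n a a'" "eqlt n b b'" "length w = n"
  shows "tmul k a b w - tmul k a' b' w = b [] * (a w - a' w) + a [] * (b w - b' w)"
proof -
  have s: "(\<Sum>i\<in>{1..<length w}. a (take i w) * b (drop i w)) =
      (\<Sum>i\<in>{1..<length w}. a' (take i w) * b' (drop i w))"
    using assms(3,4,5) unfolding eqlt_def by (auto intro!: sum.cong)
  have "a [] = a' []" "b [] = b' []" using assms unfolding eqlt_def by auto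
  then show ?thesis using assms(1,2,5) s by (simp add: tmul_split algebra_simps)
qed

lemma tmul_tone_left: "vk k b \<Longrightarrow> tmul k tone b = b"
proof
  fix w assume "vk k b"
  show "tmul k tone b w = b w"
  proof (cases "length w \<le> k")
    case True
    have "(\<Sum>i\<le>length w. tone (take i w) * b (drop i w)) = (\<Sum>i\<le>length w. if i = 0 then b w else 0)"
      by (rule sum.cong) (auto simp: tone_def)
    then show ?thesis using True by (simp add: tmul_def)
  next
    case False then show ?thesis using \<open>vk k b\<close> by (simp add: tmul_def vk_def)
  qed
qed

lemma tmul_tone_right: "vk k a \<Longrightarrow> tmul k a tone = a"
proof
  fix w assume "vk k a"
  show "tmul k a tone w = a w"
  proof (cases "length w \<le> k")
    case True
    have "(\<Sum>i\<le>length w. a (take i w) * tone (drop i w)) = (\<Sum>i\<le>length w. if i = length w then a w else 0)"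
      by (rule sum.cong) (auto simp: tone_def)
    then show ?thesis using True by (simp add: tmul_def)
  next
    case False then show ?thesis using \<open>vk k a\<close> by (simp add: tmul_def vk_def)
  qed
qed

lemma tri_swap:
  fixes f :: "nat \<Rightarrow> nat \<Rightarrow> real"
  shows "(\<Sum>i\<le>n. \<Sum>q\<in>{i..n}. f i q) = (\<Sum>q\<le>n. \<Sum>i\<le>q. f i q)"
proof -
  have e1: "\<And>i. {..n} \<inter> {q. i \<le> q} = {i..n}" by auto
  have e2: "\<And>q. {..n} \<inter> {i. i \<le> q} = (if q \<le> n then {..q} else {..n})" by auto
  have "(\<Sum>i\<le>n. \<Sum>q\<in>{i..n}. f i q) = (\<Sum>i\<le>n. \<Sum>q\<le>n. if i \<le> q then f i q else 0)"
  proof (rule sum.cong[OF refl])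
    fix i
    have "sum (f i) {i..n} = sum (f i) ({..n} \<inter> {q. i \<le> q})" using e1 by simp
    also have "\<dots> = (\<Sum>q\<le>n. if i \<le> q then f i q else 0)" by (subst sum.inter_restrict) auto
    finally show "sum (f i) {i..n} = (\<Sum>q\<le>n. if i \<le> q then f i q else 0)" .
  qed
  also have "\<dots> = (\<Sum>q\<le>n. \<Sum>i\<le>n. if i \<le> q then f i q else 0)"
    by (rule sum.swap)
  also have "\<dots> = (\<Sum>q\<le>n. \<Sum>i\<le>q. f i q)"
  proof (rule sum.cong[OF refl])
    fix q assume "q \<in> {..n}"
    then have "sum (\<lambda>i. f i q) {..q} = sum (\<lambda>i. f i q) ({..n} \<inter> {i. i \<le> q})" using e2 by simp
    also have "\<dots> = (\<Sum>i\<le>n. if i \<le> q then f i q else 0)" by (subst sum.inter_restrict) auto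
    finally show "(\<Sum>i\<le>n. if i \<le> q then f i q else 0) = sum (\<lambda>i. f i q) {..q}" by simp
  qed
  finally show ?thesis .
qed

lemma tmul_assoc: "tmul k a (tmul k b c) = tmul k (tmul k a b) c"
proof
  fix w
  show "tmul k a (tmul k b c) w = tmul k (tmul k a b) c w"
  proof (cases "length w \<le> k")
    case False then show ?thesis by (simp add: tmul_def)
  next
    case True
    let ?n = "length w"
    define f where "f p q = a (take p w) * b (drop p (take q w)) * c (drop q w)" for p q
    have "tmul k a (tmul k b c) w = (\<Sum>i\<le>?n. \<Sum>j\<le>?n - i. f i (i + j))"
      using True unfolding tmul_def f_def
      by (auto simp: sum_distrib_left take_drop drop_drop add.commute mult.assoc intro!: sum.cong)
    also have "\<dots> = (\<Sum>i\<le>?n. \<Sum>q\<in>{i..?n}. f i q)"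
    proof (rule sum.cong[OF refl])
      fix i assume "i \<in> {..?n}"
      then show "(\<Sum>j\<le>?n - i. f i (i + j)) = (\<Sum>q\<in>{i..?n}. f i q)"
        by (intro sum.reindex_bij_witness[of _ "\<lambda>q. q - i" "\<lambda>j. i + j"]) auto
    qed
    also have "\<dots> = (\<Sum>q\<le>?n. \<Sum>i\<le>q. f i q)" by (rule tri_swap)
    also have "\<dots> = tmul k (tmul k a b) c w"
      using True unfolding tmul_def f_def
      by (auto simp: sum_distrib_right min_def intro!: sum.cong)
    finally show ?thesis .
  qed
qed



lemma tmul_sum_left: "finite A \<Longrightarrow> tmul k (\<lambda>w. \<Sum>j\<in>A. f j w) b = (\<lambda>w. \<Sum>j\<in>A. tmul k (f j) b w)"
  unfolding tmul_def by (rule ext) (simp add: sum_distrib_right sum.swap[of _ _ A])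

lemma tmul_sum_right: "finite A \<Longrightarrow> tmul k a (\<lambda>w. \<Sum>j\<in>A. f j w) = (\<lambda>w. \<Sum>j\<in>A. tmul k a (f j) w)"
  unfolding tmul_def by (rule ext) (simp add: sum_distrib_left sum.swap[of _ _ A])

lemma tmul_scale_left: "tmul k (\<lambda>w. c * a w) b = (\<lambda>w. c * tmul k a b w)"
  unfolding tmul_def by (auto simp: sum_distrib_left mult.assoc)

lemma tmul_scale_right: "tmul k a (\<lambda>w. c * b w) = (\<lambda>w. c * tmul k a b w)"
  unfolding tmul_def by (auto simp: sum_distrib_left mult_ac)

lemma tpow_add: "tpow k a (m + n) = tmul k (tpow k a m) (tpow k a n)"
proof (induction m)
  case 0 then show ?case by (simp add: tmul_tone_left)
next
  case (Suc m) then show ?case by (simp add: tpow_Suc tmul_assoc)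
qed

lemma tpow_scale: "tpow k (\<lambda>w. c * a w) n = (\<lambda>w. c ^ n * tpow k a n w)"
  by (induction n) (simp_all add: tpow_Suc tmul_scale_left tmul_scale_right mult_ac)

lemma tpow_Nil: "tpow k a n [] = a [] ^ n"
  by (induction n) (simp_all add: tpow_Suc tone_def)

lemma tpow_short: "a [] = 0 \<Longrightarrow> length w < n \<Longrightarrow> tpow k a n w = 0"
proof (induction n arbitrary: w)
  case 0 then show ?case by simp
next
  case (Suc n)
  have "a (take i w) * tpow k a n (drop i w) = 0" if "i \<le> length w" for i
  proof (cases "i = 0")
    case True then show ?thesis using Suc by simp
  next
    case False
    have "length w - i < n" using Suc.prems(2) False that by arith
    then show ?thesis using Suc.IH[of "drop i w"] Suc.prems by simp
  qed
  then show ?case by (simp add: tpow_Suc tmul_def del: mult_eq_0_iff)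
qed

lemma tpow_nil: "a [] = 0 \<Longrightarrow> k < n \<Longrightarrow> tpow k a n w = 0"
proof (cases "k < length w")
  case True
  assume "k < n"
  then obtain m where "n = Suc m" by (cases n) auto
  then show ?thesis using True by (simp add: tpow_Suc tmul_long)
next
  case False
  assume "a [] = 0" "k < n"
  then show ?thesis using False by (intro tpow_short) auto
qed

definition ev :: "nat \<Rightarrow> tensor \<Rightarrow> real fps \<Rightarrow> tensor" where
  "ev k y f = (\<lambda>w. \<Sum>j\<le>k. fps_nth f j * tpow k y j w)"

lemma vk_ev[simp]: "vk k (ev k y f)"
  using vk_tpow unfolding vk_def ev_def by simp

lemma ev_Nil: "y [] = 0 \<Longrightarrow> ev k y f [] = fps_nth f 0"
proof -
  assume y: "y [] = 0"
  have "(\<Sum>j\<le>k. fps_nth f j * tpow k y j []) = (\<Sum>j\<le>k. if j = 0 then fps_nth f 0 else 0)"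
    by (rule sum.cong) (auto simp: tpow_Nil y)
  then show ?thesis by (simp add: ev_def)
qed

lemma ev_mult:
  assumes y: "y [] = 0"
  shows "ev k y (f * g) = tmul k (ev k y f) (ev k y g)"
proof
  fix w
  define h where "h i j = fps_nth f i * fps_nth g j * tpow k y (i + j) w" for i j
  have "tmul k (ev k y f) (ev k y g) w = (\<Sum>i\<le>k. \<Sum>j\<le>k. h i j)"
    unfolding ev_def h_def
    by (simp add: tmul_sum_left tmul_sum_right tmul_scale_left tmul_scale_right tpow_add mult_ac
        sum_distrib_left)
  also have "\<dots> = (\<Sum>(i,j)\<in>{..k}\<times>{..k}. h i j)"
    by (simp add: sum.cartesian_product)
  also have "\<dots> = (\<Sum>(i,j)\<in>{(i,j). i + j \<le> k}. h i j)"
  proof (rule sum.mono_neutral_right)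
    show "finite ({..k} \<times> {..k})" by simp
    show "{(i,j). i + j \<le> k} \<subseteq> {..k} \<times> {..k}" by auto
    show "\<forall>x\<in>{..k} \<times> {..k} - {(i,j). i + j \<le> k}. (case x of (i, j) \<Rightarrow> h i j) = 0"
      by (auto simp: h_def) (metis not_le tpow_nil[where a=y] y)
  qed
  also have "\<dots> = (\<Sum>n\<le>k. \<Sum>i\<le>n. h i (n - i))"
    by (rule sum.triangle_reindex_eq)
  also have "\<dots> = ev k y (f * g) w"
    unfolding ev_def h_def fps_mult_nth
    by (auto simp: sum_distrib_right atLeast0AtMost intro!: sum.cong)
  finally show "ev k y (f * g) w = tmul k (ev k y f) (ev k y g) w" by simp
qed

lemma ev_one: "ev k y 1 = tone"
proof
  fix w
  have "(\<Sum>j\<le>k. fps_nth (1::real fps) j * tpow k y j w) = (\<Sum>j\<le>k. if j = 0 then tone w else 0)"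
    by (rule sum.cong) auto
  then show "ev k y 1 w = tone w" by (simp add: ev_def)
qed

lemma ev_X: "y [] = 0 \<Longrightarrow> vk k y \<Longrightarrow> ev k y fps_X = y"
proof
  fix w assume y: "y [] = 0" "vk k y"
  show "ev k y fps_X w = y w"
  proof (cases "k = 0")
    case True
    then show ?thesis using y by (cases w) (auto simp: ev_def vk_def)
  next
    case False
    have "(\<Sum>j\<le>k. fps_nth (fps_X::real fps) j * tpow k y j w) = (\<Sum>j\<le>k. if j = 1 then tpow k y 1 w else 0)"
      by (rule sum.cong) (auto simp: fps_X_def)
    then show ?thesis using False y by (simp add: ev_def tpow_Suc tmul_tone_right)
  qed
qed

lemma ev_diff: "ev k y (f - g) = (\<lambda>w. ev k y f w - ev k y g w)"
  by (auto simp: ev_def algebra_simps sum_subtractf)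

lemma ev_sum: "finite A \<Longrightarrow> ev k y (\<Sum>l\<in>A. F l) = (\<lambda>w. \<Sum>l\<in>A. ev k y (F l) w)"
  by (auto simp: ev_def fps_sum_nth sum_distrib_right intro: sum.swap)

lemma ev_const: "ev k y (fps_const c * f) = (\<lambda>w. c * ev k y f w)"
  by (auto simp: ev_def sum_distrib_left mult.assoc)

lemma tpow_ev: "y [] = 0 \<Longrightarrow> tpow k (ev k y f) n = ev k y (f ^ n)"
  by (induction n) (simp_all add: tpow_Suc ev_one ev_mult)

lemma texp_ev: "texp k y = ev k y (fps_exp 1)"
  by (auto simp: texp_def ev_def)

lemma ev_exp_scale: "ev k z (fps_exp c) = texp k (\<lambda>w. c * z w)"
  by (auto simp: texp_def ev_def tpow_scale intro!: sum.cong)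



lemma ln_exp_X: "fps_ln (1::real) oo (fps_exp 1 - 1) = fps_X"
proof -
  have "fps_ln (1::real) = fps_inv (fps_exp 1 - 1)" by (rule fps_ln_fps_exp_inv) simp
  moreover have "fps_inv (fps_exp (1::real) - 1) oo (fps_exp 1 - 1) = fps_X"
    by (rule fps_inv) simp_all
  ultimately show ?thesis by simp
qed

lemma tlog_ev:
  assumes y: "y [] = 0" and E: "fps_nth E 0 = 1"
  shows "tlog k (ev k y E) = ev k y (fps_ln 1 oo (E - 1))"
proof
  fix w
  let ?c = "\<lambda>l::nat. ((-1) ^ (l + 1) / real l)"
  have p: "(\<lambda>v. ev k y E v - tone v) = ev k y (E - 1)"
    by (simp add: ev_diff ev_one)
  have E0: "fps_nth (E - 1) 0 = 0" using E by simp
  have "tlog k (ev k y E) w = (\<Sum>l\<in>{1..k}. ?c l * ev k y ((E - 1) ^ l) w)"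
    unfolding tlog_def p tpow_ev[where y=y, OF y] ..
  also have "\<dots> = (\<Sum>l\<in>{1..k}. \<Sum>j\<le>k. ?c l * fps_nth ((E - 1) ^ l) j * tpow k y j w)"
    by (simp add: ev_def sum_distrib_left mult.assoc)
  also have "\<dots> = (\<Sum>j\<le>k. (\<Sum>l\<in>{1..k}. ?c l * fps_nth ((E - 1) ^ l) j) * tpow k y j w)"
    by (subst sum.swap) (simp add: sum_distrib_right)
  also have "\<dots> = (\<Sum>j\<le>k. fps_nth (fps_ln 1 oo (E - 1)) j * tpow k y j w)"
  proof (rule sum.cong[OF refl])
    fix j assume j: "j \<in> {..k}"
    have "(\<Sum>l\<in>{1..k}. ?c l * fps_nth ((E - 1) ^ l) j) = (\<Sum>l\<in>{1..j}. ?c l * fps_nth ((E - 1) ^ l) j)"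
    proof (rule sum.mono_neutral_right)
      show "\<forall>l\<in>{1..k} - {1..j}. ?c l * fps_nth ((E - 1) ^ l) j = 0"
        using startsby_zero_power_prefix[OF E0] by auto
    qed (use j in auto)
    also have "\<dots> = (\<Sum>i\<in>{0..j}. fps_nth (fps_ln 1) i * fps_nth ((E - 1) ^ i) j)"
    proof -
      have "{0..j} = insert 0 {1..j}" by auto
      then have "(\<Sum>i\<in>{0..j}. fps_nth (fps_ln (1::real)) i * fps_nth ((E - 1) ^ i) j)
          = (\<Sum>i\<in>{1..j}. fps_nth (fps_ln 1) i * fps_nth ((E - 1) ^ i) j)"
        by simp
      also have "\<dots> = (\<Sum>l\<in>{1..j}. ?c l * fps_nth ((E - 1) ^ l) j)"
      proof (rule sum.cong[OF refl])
        fix i :: nat assume "i \<in> {1..j}"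
        then obtain m where "i = Suc m" by (cases i) auto
        then show "fps_nth (fps_ln 1) i * fps_nth ((E - 1) ^ i) j = ?c i * fps_nth ((E - 1) ^ i) j"
          by (simp add: fps_ln_nth)
      qed
      finally show ?thesis by simp
    qed
    finally show "(\<Sum>l\<in>{1..k}. ?c l * fps_nth ((E - 1) ^ l) j) * tpow k y j w =
        fps_nth (fps_ln 1 oo (E - 1)) j * tpow k y j w"
      by (simp add: fps_compose_nth)
  qed
  also have "\<dots> = ev k y (fps_ln 1 oo (E - 1)) w" by (simp add: ev_def)
  finally show "tlog k (ev k y E) w = ev k y (fps_ln 1 oo (E - 1)) w" .
qed

lemma log_exp: "y [] = 0 \<Longrightarrow> vk k y \<Longrightarrow> tlog k (texp k y) = y"
  by (simp add: texp_ev tlog_ev ln_exp_X ev_X)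

lemma lie_alg_props: "z \<in> lie_alg d k \<Longrightarrow> z [] = 0 \<and> vk k z"
  by (induction rule: lie_alg.induct) (auto simp: tletter_def vk_def tbracket_def tmul_long)

lemma texp_Nil: "y [] = 0 \<Longrightarrow> texp k y [] = 1"
  by (simp add: texp_ev ev_Nil)

lemma G_props: "m \<in> lie_group d k \<Longrightarrow> m [] = 1 \<and> vk k m"
  unfolding lie_group_def using lie_alg_props by (auto simp: texp_ev ev_Nil)

lemma scale_in: "z \<in> lie_alg d k \<Longrightarrow> (\<lambda>w. c * z w) \<in> lie_alg d k"
  by (rule lie_alg.smult)

lemma rinv_unique:
  assumes m: "m [] = 1" and vy: "vk k y" "vk k y'"
    and h: "tmul k m y = tone" "tmul k m y' = tone"
  shows "y = y'"
proof -
  have "eqlt n y y'" for n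
  proof (induction n)
    case 0 then show ?case by (simp add: eqlt_def)
  next
    case (Suc n)
    have "y v = y' v" if "length v = n" for v
    proof -
      consider "n = 0" | "k < n" | "1 \<le> n" "n \<le> k" by linarith
      then show ?thesis
      proof cases
        case 1
        then have "v = []" using that by simp
        then show ?thesis using h m by (metis mult_1 tmul_Nil)
      next
        case 2 then show ?thesis using vy that by (simp add: vk_def)
      next
        case 3
        have "tmul k m y v - tmul k m y' v = y [] * (m v - m v) + m [] * (y v - y' v)"
          by (rule ML2[OF 3 _ Suc that]) (simp add: eqlt_def)
        then show ?thesis using h m by simp
      qed
    qed
    then show ?case using Suc by (auto simp: eqlt_def less_Suc_eq)
  qed
  then show ?thesis by (auto simp: eqlt_def fun_eq_iff)
qed

lemma texp_inv:
  assumes a: "a [] = 0"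
  shows "tmul k (texp k a) (texp k (\<lambda>w. - 1 * a w)) = tone"
proof -
  have "tmul k (texp k a) (texp k (\<lambda>w. - 1 * a w)) = tmul k (ev k a (fps_exp 1)) (ev k a (fps_exp (-1)))"
  proof -
    have e1: "texp k a = ev k a (fps_exp 1)" by (rule texp_ev)
    have e2: "texp k (\<lambda>w. -1 * a w) = ev k a (fps_exp (-1))" by (rule ev_exp_scale[symmetric])
    show ?thesis by (simp only: e1 e2)
  qed
  also have "\<dots> = ev k a (fps_exp 1 * fps_exp (-1))" by (simp add: ev_mult[where y=a, OF a])
  also have "\<dots> = tone" by (simp flip: fps_exp_add_mult add: ev_one)
  finally show ?thesis .
qed

lemma ginv_eq:
  assumes a: "a \<in> lie_alg d k"
  shows "ginv d k (texp k a) = texp k (\<lambda>w. - 1 * a w)"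
  unfolding ginv_def
proof (rule the_equality)
  have a0: "a [] = 0" using lie_alg_props[OF a] by simp
  show "texp k (\<lambda>w. - 1 * a w) \<in> lie_group d k \<and> tmul k (texp k a) (texp k (\<lambda>w. - 1 * a w)) = tone"
  proof
    show "texp k (\<lambda>w. - 1 * a w) \<in> lie_group d k"
      unfolding lie_group_def by (rule imageI, rule lie_alg.smult[OF a])
  qed (rule texp_inv[where a=a, OF a0])
  fix y assume y: "y \<in> lie_group d k \<and> tmul k (texp k a) y = tone"
  show "y = texp k (\<lambda>w. - 1 * a w)"
  proof (rule rinv_unique)
    show "texp k a [] = 1" by (simp add: texp_Nil a0)
    show "vk k y" using G_props y by blast
    show "vk k (texp k (\<lambda>w. - 1 * a w))" by (simp add: texp_ev)
    show "tmul k (texp k a) y = tone" using y by simp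
    show "tmul k (texp k a) (texp k (\<lambda>w. - 1 * a w)) = tone" using texp_inv[where a=a, OF a0] .
  qed
qed

lemma G_inv:
  assumes "m \<in> lie_group d k"
  shows "tmul k m (ginv d k m) = tone \<and> vk k (ginv d k m)"
proof -
  obtain a where a: "a \<in> lie_alg d k" "m = texp k a" using assms by (auto simp: lie_group_def)
  then have a0: "a [] = 0" using lie_alg_props by blast
  show ?thesis using a texp_inv[where a=a, OF a0] ginv_eq[OF a(1)] by (simp add: texp_ev)
qed



lemma pow_diff:
  assumes p: "p [] = 0" "p' [] = 0" and e: "eqlt n p p'" and n: "1 \<le> n" "n \<le> k"
  shows "eqlt n (tpow k p l) (tpow k p' l) \<and>
    (\<forall>w. length w = n \<longrightarrow> tpow k p l w - tpow k p' l w = (if l = 1 then p w - p' w else 0))"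
proof (induction l)
  case 0 then show ?case by (simp add: eqlt_def)
next
  case (Suc l)
  have e1: "eqlt n (tpow k p (Suc l)) (tpow k p' (Suc l))"
    unfolding tpow_Suc using ML1[OF e] Suc by blast
  moreover have "tpow k p (Suc l) w - tpow k p' (Suc l) w = (if Suc l = 1 then p w - p' w else 0)"
    if "length w = n" for w
  proof -
    have "tpow k p (Suc l) w - tpow k p' (Suc l) w =
        tpow k p l [] * (p w - p' w) + p [] * (tpow k p l w - tpow k p' l w)"
      unfolding tpow_Suc using ML2[OF n e _ that] Suc by blast
    then show ?thesis using p by (simp add: tpow_Nil)
  qed
  ultimately show ?case by blast
qed

lemma log_diff:
  assumes s: "s [] = 1" "s' [] = 1" and e: "eqlt n s s'" and n: "1 \<le> n" "n \<le> k"
    and w: "length w = n"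
  shows "tlog k s w - tlog k s' w = s w - s' w"
proof -
  define p where "p = (\<lambda>v. s v - tone v)"
  define p' where "p' = (\<lambda>v. s' v - tone v)"
  have p0: "p [] = 0" "p' [] = 0" using s by (simp_all add: p_def p'_def tone_def)
  have ep: "eqlt n p p'" using e by (simp add: eqlt_def p_def p'_def)
  note pd = pow_diff[OF p0 ep n]
  have "tlog k s w - tlog k s' w = (\<Sum>l\<in>{1..k}. ((-1) ^ (l + 1) / real l) * (tpow k p l w - tpow k p' l w))"
    unfolding tlog_def p_def p'_def by (simp only: sum_subtractf[symmetric] right_diff_distrib)
  also have "\<dots> = (\<Sum>l\<in>{1..k}. if l = 1 then p w - p' w else 0)"
    using pd w by (intro sum.cong) auto
  also have "\<dots> = p w - p' w" using n by simp
  also have "\<dots> = s w - s' w" by (simp add: p_def p'_def)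
  finally show ?thesis .
qed

lemma inv_diff:
  assumes m: "m [] = 1" "m' [] = 1" and h: "tmul k m I = tone" "tmul k m' I' = tone"
    and e: "eqlt n m m'" and n: "1 \<le> n" "n \<le> k"
  shows "eqlt n I I' \<and> (\<forall>w. length w = n \<longrightarrow> I w - I' w = -(m w - m' w))"
proof -
  have I0: "I [] = 1" "I' [] = 1" using h m by (metis mult_1 tmul_Nil tone_def)+
  have "j \<le> n \<longrightarrow> eqlt j I I'" for j
  proof (induction j)
    case 0 then show ?case by (simp add: eqlt_def)
  next
    case (Suc j)
    show ?case
    proof
      assume j: "Suc j \<le> n"
      have "I v = I' v" if v: "length v = j" for v
      proof (cases "j = 0")
        case True then show ?thesis using v I0 by simp
      next
        case False
        have ej: "eqlt j m m'" using e j by (simp add: eqlt_def)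
        have "tmul k m I v - tmul k m' I' v = I [] * (m v - m' v) + m [] * (I v - I' v)"
          using ML2[OF _ _ ej _ v] Suc j False n by simp
        moreover have "m v = m' v" using e j v by (simp add: eqlt_def)
        ultimately show ?thesis using h m by simp
      qed
      then show "eqlt (Suc j) I I'" using Suc j by (auto simp: eqlt_def less_Suc_eq)
    qed
  qed
  then have eI: "eqlt n I I'" by simp
  moreover have "I w - I' w = -(m w - m' w)" if w: "length w = n" for w
  proof -
    have "tmul k m I w - tmul k m' I' w = I [] * (m w - m' w) + m [] * (I w - I' w)"
      using ML2[OF n e eI w] .
    then show ?thesis using h m I0 by simp
  qed
  ultimately show ?thesis by blast
qed

lemma bary_unique:
  fixes N :: nat
  assumes G: "m \<in> lie_group d k" "m' \<in> lie_group d k" and N: "0 < N"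
    and xs: "\<forall>i<N. xs i [] = 1"
    and h1: "\<forall>w. (\<Sum>i<N. tlog k (tmul k (ginv d k m) (xs i)) w) = 0"
    and h2: "\<forall>w. (\<Sum>i<N. tlog k (tmul k (ginv d k m') (xs i)) w) = 0"
  shows "m = m'"
proof -
  define I where "I = ginv d k m"
  define I' where "I' = ginv d k m'"
  have m0: "m [] = 1" "m' [] = 1" "vk k m" "vk k m'" using G_props G by blast+
  have hI: "tmul k m I = tone" "tmul k m' I' = tone" using G_inv G by (auto simp: I_def I'_def)
  have I0: "I [] = 1" "I' [] = 1" using hI m0 by (metis mult_1 tmul_Nil tone_def)+
  have "eqlt n m m'" for n
  proof (induction n)
    case 0 then show ?case by (simp add: eqlt_def)
  next
    case (Suc n)
    have "m v = m' v" if v: "length v = n" for v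
    proof -
      consider "n = 0" | "k < n" | "1 \<le> n" "n \<le> k" by linarith
      then show ?thesis
      proof cases
        case 1 then show ?thesis using v m0 by simp
      next
        case 2 then show ?thesis using v m0 by (simp add: vk_def)
      next
        case 3
        note id = inv_diff[OF m0(1,2) hI Suc 3]
        have exs: "eqlt n (xs i) (xs i)" for i by (simp add: eqlt_def)
        have each: "tlog k (tmul k I (xs i)) v - tlog k (tmul k I' (xs i)) v = -(m v - m' v)"
          if i: "i < N" for i
        proof -
          have ey: "eqlt n (tmul k I (xs i)) (tmul k I' (xs i))"
            using ML1[OF _ exs] id by blast
          have y0: "tmul k I (xs i) [] = 1" "tmul k I' (xs i) [] = 1" using I0 xs i by simp_all
          have "tmul k I (xs i) v - tmul k I' (xs i) v = xs i [] * (I v - I' v) + I [] * (xs i v - xs i v)"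
            using ML2[OF 3 _ exs v] id by blast
          then have "tmul k I (xs i) v - tmul k I' (xs i) v = -(m v - m' v)"
            using id v xs i I0 by simp
          then show ?thesis using log_diff[OF y0 ey 3 v] by simp
        qed
        have "0 = (\<Sum>i<N. tlog k (tmul k I (xs i)) v) - (\<Sum>i<N. tlog k (tmul k I' (xs i)) v)"
          using h1 h2 by (simp add: I_def I'_def)
        also have "\<dots> = (\<Sum>i<N. -(m v - m' v))"
          by (simp only: sum_subtractf[symmetric]) (rule sum.cong, auto simp: each)
        also have "\<dots> = - real N * (m v - m' v)" by (simp add: algebra_simps)
        finally show ?thesis using N by simp
      qed
    qed
    then show ?case using Suc by (auto simp: eqlt_def less_Suc_eq)
  qed
  then show ?thesis by (auto simp: eqlt_def fun_eq_iff)
qed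



lemma tpow_texp: "z [] = 0 \<Longrightarrow> tpow k (texp k z) n = ev k z (fps_exp (real n))"
proof -
  assume z: "z [] = 0"
  have "tpow k (texp k z) n = ev k z (fps_exp 1 ^ n)"
    by (simp only: texp_ev tpow_ev[where y=z, OF z])
  also have "\<dots> = ev k z (fps_exp (real n))" by (simp add: fps_exp_power_mult)
  finally show ?thesis .
qed

lemma vk_scale: "vk k z \<Longrightarrow> vk k (\<lambda>w. c * z w)"
  by (simp add: vk_def)

theorem proposition4p5:
  fixes d k N :: nat and x :: tensor and u :: "nat \<Rightarrow> nat"
  assumes "0 < N"
    and "x \<in> lie_group d k"
    and "N dvd (\<Sum>i<N. u i)"
  shows "bary d k N (\<lambda>i. tpow k x (u i)) = tpow k x ((\<Sum>i<N. u i) div N)"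
proof -
  obtain z where z: "z \<in> lie_alg d k" "x = texp k z" using assms(2) by (auto simp: lie_group_def)
  have z0: "z [] = 0" "vk k z" using lie_alg_props[OF z(1)] by auto
  define S where "S = (\<Sum>i<N. u i)"
  define q where "q = S div N"
  have Sq: "real S = real N * real q" using assms(3) by (simp add: S_def q_def flip: of_nat_mult)
  define m0 where "m0 = tpow k x q"
  have m0e: "m0 = texp k (\<lambda>w. real q * z w)"
    unfolding m0_def z(2) tpow_texp[where z=z, OF z0(1)] by (rule ev_exp_scale)
  have m0G: "m0 \<in> lie_group d k"
    unfolding m0e lie_group_def by (rule imageI, rule lie_alg.smult[OF z(1)])
  have gi: "ginv d k m0 = ev k z (fps_exp (- real q))"
  proof -
    have "ginv d k m0 = texp k (\<lambda>w. - 1 * (real q * z w))"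
      unfolding m0e by (rule ginv_eq, rule lie_alg.smult[OF z(1)])
    also have "\<dots> = texp k (\<lambda>w. (- real q) * z w)" by simp
    also have "\<dots> = ev k z (fps_exp (- real q))" by (rule ev_exp_scale[symmetric])
    finally show ?thesis .
  qed
  have each: "tlog k (tmul k (ginv d k m0) (tpow k x (u i))) = (\<lambda>w. (real (u i) - real q) * z w)" for i
  proof -
    have "tmul k (ginv d k m0) (tpow k x (u i)) = ev k z (fps_exp (- real q) * fps_exp (real (u i)))"
      unfolding gi z(2) tpow_texp[where z=z, OF z0(1)] by (rule ev_mult[where y=z, OF z0(1), symmetric])
    also have "\<dots> = ev k z (fps_exp (real (u i) - real q))"
      by (simp flip: fps_exp_add_mult)
    also have "\<dots> = texp k (\<lambda>w. (real (u i) - real q) * z w)" by (rule ev_exp_scale)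
    finally show ?thesis using log_exp z0 vk_scale by simp
  qed
  have P: "m0 \<in> lie_group d k \<and> (\<forall>w. (\<Sum>i<N. tlog k (tmul k (ginv d k m0) (tpow k x (u i))) w) = 0)"
  proof (intro conjI allI m0G)
    fix w
    have "(\<Sum>i<N. tlog k (tmul k (ginv d k m0) (tpow k x (u i))) w) = (\<Sum>i<N. (real (u i) - real q) * z w)"
      by (simp add: each)
    also have "\<dots> = (real S - real N * real q) * z w"
      by (simp add: S_def sum_distrib_right sum_subtractf left_diff_distrib)
    also have "\<dots> = 0" using Sq by simp
    finally show "(\<Sum>i<N. tlog k (tmul k (ginv d k m0) (tpow k x (u i))) w) = 0" .
  qed
  have x1: "\<forall>i<N. tpow k x (u i) [] = 1"
    using G_props[OF assms(2)] by (simp add: tpow_Nil)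
  have m0eq: "tpow k x ((\<Sum>i<N. u i) div N) = m0" by (simp add: m0_def q_def S_def)
  show ?thesis
    unfolding bary_def m0eq
  proof (rule the_equality)
    show "m0 \<in> lie_group d k \<and> (\<forall>w. (\<Sum>i<N. tlog k (tmul k (ginv d k m0) (tpow k x (u i))) w) = 0)"
      by (rule P)
    fix m assume "m \<in> lie_group d k \<and> (\<forall>w. (\<Sum>i<N. tlog k (tmul k (ginv d k m) (tpow k x (u i))) w) = 0)"
    then show "m = m0"
      using bary_unique[where xs="\<lambda>i. tpow k x (u i)" and m=m and m'=m0 and N=N and d=d and k=k] m0G assms(1) x1 P by blast
  qed
qed


end
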